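(* Let $n\ge 2$ and let $\mathcal{P}_n$ be the set of partitions of $\{1,\dots,n\}$. The Correlation Distance $\mathrm{CD}:\mathcal{P}_n\times\mathcal{P}_n\to[0,1]$ is a metric on $\mathcal{P}_n$: for all $A,B,C\in\mathcal{P}_n$, $\mathrm{CD}(A,B)=\mathrm{CD}(B,A)$, $\mathrm{CD}(A,B)\ge 0$ with equality if and only if $A=B$, and $\mathrm{CD}(A,C)\le \mathrm{CD}(A,B)+\mathrm{CD}(B,C)$.
   Context: A clustering of $\{1,\dots,n\}$ is a partition $A=\{A_1,\dots,A_{k_A}\}$ into $k_A$ nonempty disjoint clusters. Let $N=\binom n2$. For a clustering $A$, let $\vec A\in\{0,1\}^N$ be the vector indexed by unordered pairs $\{v,w\}$ of distinct elements, whose entry is $1$ iff $v,w$ lie in the same cluster of $A$ (an intra-cluster pair), and let $m_A$ be the number of intra-cluster pairs. Let $\mathbf 1$ be the all-ones vector in $\mathbb R^N$. Define the unit vector $\vec u(A)=\frac{1}{\sqrt N}\mathbf 1$ if $k_A=1$; $\vec u(A)=\frac{\vec A-\frac{m_A}{N}\mathbf 1}{\|\vec A-\frac{m_A}{N}\mathbf 1\|}$ if $1<k_A<n$; $\vec u(A)=-\frac{1}{\sqrt N}\mathbf 1$ if $k_A=n$. The correlation coefficient is $\mathrm{CC}(A,B)=\langle \vec u(A),\vec u(B)\rangle$ (for $1<k_A,k_B<n$ this equals the Pearson correlation $\frac{N_{11}N_{00}-N_{10}N_{01}}{\sqrt{(N_{11}+N_{10})(N_{11}+N_{01})(N_{00}+N_{10})(N_{00}+N_{01})}}$,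 where $N_{11},N_{10},N_{01},N_{00}$ count pairs that are intra in both / intra in $A$ only / intra in $B$ only / intra in neither). The Correlation Distance is $\mathrm{CD}(A,B)=\frac1\pi\arccos\mathrm{CC}(A,B)$. *)

theory Defs
  imports "HOL-Analysis.Analysis" "HOL-Library.Disjoint_Sets"
begin

definition clusterings :: "nat \<Rightarrow> nat set set set" where
  "clusterings n = {A. partition_on {1..n} A}"

definition pairs :: "nat \<Rightarrow> nat set set" where
  "pairs n = {{v, w} | v w. v \<in> {1..n} \<and> w \<in> {1..n} \<and> v \<noteq> w}"

definition NN :: "nat \<Rightarrow> real" where
  "NN n = real (card (pairs n))"

definition cvec :: "nat set set \<Rightarrow> nat set \<Rightarrow> real" where
  "cvec A p = (if \<exists>X\<in>A. p \<subseteq> X then 1 else 0)"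

definition m_intra :: "nat \<Rightarrow> nat set set \<Rightarrow> real" where
  "m_intra n A = real (card {p \<in> pairs n. \<exists>X\<in>A. p \<subseteq> X})"

definition vnorm :: "nat \<Rightarrow> (nat set \<Rightarrow> real) \<Rightarrow> real" where
  "vnorm n x = sqrt (\<Sum>p\<in>pairs n. (x p)\<^sup>2)"

definition uvec :: "nat \<Rightarrow> nat set set \<Rightarrow> nat set \<Rightarrow> real" where
  "uvec n A = (if card A = 1 then (\<lambda>p. 1 / sqrt (NN n))
     else if card A = n then (\<lambda>p. - 1 / sqrt (NN n))
     else (let c = (\<lambda>p. cvec A p - m_intra n A / NN n) in (\<lambda>p. c p / vnorm n c)))"

definition CC :: "nat \<Rightarrow> nat set set \<Rightarrow> nat set set \<Rightarrow> real" where
  "CC n A B = (\<Sum>p\<in>pairs n. uvec n A p * uvec n B p)"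

definition CD :: "nat \<Rightarrow> nat set set \<Rightarrow> nat set set \<Rightarrow> real" where
  "CD n A B = arccos (CC n A B) / pi"

end

theory Submission
  imports Defs
begin


lemma arccos_tri:
  fixes x y z :: real
  assumes "-1\<le>x" "x\<le>1" "-1\<le>y" "y\<le>1" "-1\<le>z" "z\<le>1"
    and cs: "(z - x*y)^2 \<le> (1-x^2)*(1-y^2)"
  shows "arccos z \<le> arccos x + arccos y"
proof (cases "arccos x + arccos y \<ge> pi")
  case True
  then show ?thesis using arccos_ubound[of z] assms by linarith
next
  case False
  define a where "a = arccos x"
  define b where "b = arccos y"
  have a0: "0 \<le> a" "a \<le> pi" using arccos_lbound arccos_ubound assms a_def by auto
  have b0: "0 \<le> b" "b \<le> pi" using arccos_lbound arccos_ubound assms b_def by auto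
  have sa: "sin a = sqrt (1 - x^2)" unfolding a_def using assms by (simp add: sin_arccos_abs abs_le_iff)
  have sb: "sin b = sqrt (1 - y^2)" unfolding b_def using assms by (simp add: sin_arccos_abs abs_le_iff)
  have ca: "cos a = x" "cos b = y" using assms a_def b_def by auto
  have x2: "0 \<le> 1 - x^2" "0 \<le> 1 - y^2" using assms by (auto simp: abs_le_iff abs_square_le_1)
  have "\<bar>z - x*y\<bar> \<le> sqrt ((1-x^2)*(1-y^2))"
    using cs real_le_rsqrt by (metis real_sqrt_abs real_sqrt_le_mono)
  hence "cos (a+b) \<le> z" using sa sb ca x2 by (simp add: cos_add real_sqrt_mult abs_le_iff)
  hence "arccos z \<le> arccos (cos (a+b))"
    using assms by (intro arccos_le_arccos) auto
  also have "\<dots> = a + b" using False a0 b0 a_def b_def by (intro arccos_cos) auto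
  finally show ?thesis unfolding a_def b_def .
qed

lemma inner_bound:
  fixes a b :: "'a \<Rightarrow> real"
  assumes "finite S" "(\<Sum>p\<in>S. (a p)^2) = 1" "(\<Sum>p\<in>S. (b p)^2) = 1"
  shows "-1 \<le> (\<Sum>p\<in>S. a p * b p) \<and> (\<Sum>p\<in>S. a p * b p) \<le> 1"
proof -
  have "0 \<le> (\<Sum>p\<in>S. (a p + b p)^2)" "0 \<le> (\<Sum>p\<in>S. (a p - b p)^2)"
    by (auto intro: sum_nonneg)
  moreover have "(\<Sum>p\<in>S. (a p + b p)^2) = (\<Sum>p\<in>S. (a p)^2) + (\<Sum>p\<in>S. (b p)^2) + 2 * (\<Sum>p\<in>S. a p * b p)"
    by (simp add: power2_sum sum.distrib sum_distrib_left mult.assoc)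
  moreover have "(\<Sum>p\<in>S. (a p - b p)^2) = (\<Sum>p\<in>S. (a p)^2) + (\<Sum>p\<in>S. (b p)^2) - 2 * (\<Sum>p\<in>S. a p * b p)"
    by (simp add: power2_diff sum.distrib sum_distrib_left sum_subtractf mult.assoc)
  ultimately show ?thesis using assms by linarith
qed

lemma sph_tri:
  fixes a b c :: "'a \<Rightarrow> real"
  assumes S: "finite S" and ua: "(\<Sum>p\<in>S. (a p)^2) = 1" and ub: "(\<Sum>p\<in>S. (b p)^2) = 1"
    and uc: "(\<Sum>p\<in>S. (c p)^2) = 1"
  shows "arccos (\<Sum>p\<in>S. a p * c p) \<le> arccos (\<Sum>p\<in>S. a p * b p) + arccos (\<Sum>p\<in>S. b p * c p)"
proof -
  define x where "x = (\<Sum>p\<in>S. a p * b p)"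
  define y where "y = (\<Sum>p\<in>S. b p * c p)"
  define z where "z = (\<Sum>p\<in>S. a p * c p)"
  have bx: "-1\<le>x \<and> x\<le>1" using inner_bound[OF S ua ub] x_def by simp
  have by': "-1\<le>y \<and> y\<le>1" using inner_bound[OF S ub uc] y_def by simp
  have bz: "-1\<le>z \<and> z\<le>1" using inner_bound[OF S ua uc] z_def by simp
  define a' where "a' = (\<lambda>p. a p - x * b p)"
  define c' where "c' = (\<lambda>p. c p - y * b p)"
  have e1: "(\<Sum>p\<in>S. a' p * c' p) = z - x*y"
  proof -
    have "(\<Sum>p\<in>S. a' p * c' p) = (\<Sum>p\<in>S. a p * c p) - y * (\<Sum>p\<in>S. a p * b p) - x * (\<Sum>p\<in>S. b p * c p) + x*y*(\<Sum>p\<in>S. (b p)^2)"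
      unfolding a'_def c'_def
      by (simp add: algebra_simps sum.distrib sum_subtractf sum_distrib_left power2_eq_square)
    thus ?thesis using ub x_def y_def z_def by simp
  qed
  have e2: "(\<Sum>p\<in>S. (a' p)^2) = 1 - x^2"
  proof -
    have "(\<Sum>p\<in>S. (a' p)^2) = (\<Sum>p\<in>S. (a p)^2) - 2 * x * (\<Sum>p\<in>S. a p * b p) + x^2*(\<Sum>p\<in>S. (b p)^2)"
      unfolding a'_def
      by (simp add: algebra_simps sum.distrib sum_subtractf sum_distrib_left power2_eq_square)
    thus ?thesis using ua ub x_def by (simp add: power2_eq_square)
  qed
  have e3: "(\<Sum>p\<in>S. (c' p)^2) = 1 - y^2"
  proof -
    have "(\<Sum>p\<in>S. (c' p)^2) = (\<Sum>p\<in>S. (c p)^2) - 2 * y * (\<Sum>p\<in>S. b p * c p) + y^2*(\<Sum>p\<in>S. (b p)^2)"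
      unfolding c'_def
      by (simp add: algebra_simps sum.distrib sum_subtractf sum_distrib_left power2_eq_square)
    thus ?thesis using uc ub y_def by (simp add: power2_eq_square)
  qed
  have "(z - x*y)^2 \<le> (1-x^2)*(1-y^2)"
    using Cauchy_Schwarz_ineq_sum[of a' c' S] e1 e2 e3 by simp
  thus ?thesis using arccos_tri bx by' bz x_def y_def z_def by blast
qed



lemma pairs_finite: "finite (pairs n)"
proof -
  have "pairs n \<subseteq> Pow {1..n}" unfolding pairs_def by auto
  thus ?thesis by (rule finite_subset) auto
qed

lemma pairs_sub: "p \<in> pairs n \<Longrightarrow> p \<subseteq> {1..n}"
  unfolding pairs_def by auto

lemma NN_pos: "n \<ge> 2 \<Longrightarrow> NN n > 0"
proof -
  assume "n \<ge> 2"
  hence "{1,2} \<in> pairs n" unfolding pairs_def by force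
  thus ?thesis unfolding NN_def using pairs_finite card_gt_0_iff by fastforce
qed

lemma part_finite: "partition_on {1..n} (A::nat set set) \<Longrightarrow> finite A"
proof -
  assume "partition_on {1..n} A"
  hence "A \<subseteq> Pow {1..n}" using partition_onD1 by blast
  thus ?thesis by (rule finite_subset) auto
qed

lemma part_same:
  assumes "partition_on {1..n} (A::nat set set)" "X \<in> A" "Y \<in> A" "x \<in> X" "x \<in> Y"
  shows "X = Y"
  using assms partition_onD2 disjointD by blast

lemma L1:
  assumes "partition_on {1..n} A" "card A = 1" "p \<in> pairs n"
  shows "cvec A p = 1"
proof -
  obtain X where "A = {X}" using assms(2) card_1_singletonE by blast
  hence "X = {1..n}" using partition_onD1[OF assms(1)] by simp
  thus ?thesis using pairs_sub[OF assms(3)] \<open>A = {X}\<close> unfolding cvec_def by auto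
qed

lemma L2:
  assumes P: "partition_on {1..n} A" and c: "card A = n" and p: "p \<in> pairs n"
  shows "cvec A p = 0"
proof (rule ccontr)
  assume "cvec A p \<noteq> 0"
  then obtain X where X: "X \<in> A" "p \<subseteq> X" unfolding cvec_def by (auto split: if_splits)
  obtain v w where vw: "p = {v,w}" "v \<noteq> w" using p unfolding pairs_def by auto
  have fA: "finite A" using part_finite[OF P] .
  have fY: "finite Y" if "Y \<in> A" for Y
  proof -
    have "Y \<subseteq> {1..n}" using partition_onD1[OF P] that by blast
    thus ?thesis using finite_subset by blast
  qed
  have ne: "card Y \<ge> 1" if "Y \<in> A" for Y
  proof -
    have "Y \<noteq> {}" using partition_onD3[OF P] that by blast
    thus ?thesis using fY[OF that] by (simp add: Suc_le_eq card_gt_0_iff)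
  qed
  have "card X \<ge> 2"
  proof -
    have "card {v,w} = 2" using vw by simp
    moreover have "card {v,w} \<le> card X" using X vw by (intro card_mono[OF fY[OF X(1)]]) auto
    ultimately show ?thesis by simp
  qed
  have "n = card {1..n}" by simp
  also have "\<dots> = card (\<Union>A)" using partition_onD1[OF P] by simp
  also have "\<dots> = sum card A"
    using card_Union_disjoint[OF partition_onD2[OF P] fY] by simp
  also have "\<dots> = card X + sum card (A - {X})" using sum.remove[OF fA X(1)] by simp
  also have "\<dots> \<ge> 2 + sum (\<lambda>_. 1) (A - {X})"
    using \<open>card X \<ge> 2\<close> sum_mono[of "A - {X}" "\<lambda>_. 1" card] ne by (intro add_mono) auto
  finally have "n \<ge> 2 + card (A - {X})" by simp
  moreover have "card (A - {X}) = card A - 1" using fA X(1) by simp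
  moreover have "card A \<ge> 1" using fA X(1) by (auto simp: Suc_le_eq card_gt_0_iff)
  ultimately show False using c by simp
qed

lemma L3:
  assumes P: "partition_on {1..n} A" and c: "card A \<noteq> n"
  shows "\<exists>p\<in>pairs n. cvec A p = 1"
proof (rule ccontr)
  assume H: "\<not> ?thesis"
  have sing: "\<And>Y x y. Y \<in> A \<Longrightarrow> x \<in> Y \<Longrightarrow> y \<in> Y \<Longrightarrow> x = y"
  proof (rule ccontr)
    fix Y x y assume Y: "Y \<in> A" "x \<in> Y" "y \<in> Y" "x \<noteq> y"
    hence "{x,y} \<in> pairs n" using partition_onD1[OF P] unfolding pairs_def by blast
    moreover have "cvec A {x,y} = 1" using Y unfolding cvec_def by auto
    ultimately show False using H by blast
  qed
  have "A = (\<lambda>x. {x}) ` {1..n}"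
  proof
    show "A \<subseteq> (\<lambda>x. {x}) ` {1..n}"
    proof
      fix Y assume Y: "Y \<in> A"
      then obtain x where "x \<in> Y" using partition_onD3[OF P] by (metis ex_in_conv)
      hence "Y = {x}" using sing Y by blast
      moreover have "x \<in> {1..n}" using partition_onD1[OF P] Y \<open>x \<in> Y\<close> by blast
      ultimately show "Y \<in> (\<lambda>x. {x}) ` {1..n}" by blast
    qed
    show "(\<lambda>x. {x}) ` {1..n} \<subseteq> A"
    proof
      fix Z assume "Z \<in> (\<lambda>x. {x}) ` {1..n}"
      then obtain x where x: "x \<in> {1..n}" "Z = {x}" by blast
      then obtain Y where "Y \<in> A" "x \<in> Y" using partition_onD1[OF P] by blast
      hence "Y = {x}" using sing by blast
      thus "Z \<in> A" using x \<open>Y \<in> A\<close> by simp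
    qed
  qed
  hence "card A = n" by (simp add: card_image)
  thus False using c by simp
qed

lemma L4:
  assumes P: "partition_on {1..n} A" and c: "card A \<noteq> 1" and n: "n \<ge> 1"
  shows "\<exists>p\<in>pairs n. cvec A p = 0"
proof -
  have "A \<noteq> {}" using partition_onD1[OF P] n by auto
  then obtain X where X: "X \<in> A" by blast
  have "\<exists>Y\<in>A. Y \<noteq> X"
  proof (rule ccontr)
    assume "\<not> ?thesis"
    hence "A = {X}" using X by blast
    thus False using c by simp
  qed
  then obtain Y where Y: "Y \<in> A" "Y \<noteq> X" by blast
  obtain x where x: "x \<in> X" using X partition_onD3[OF P] by (metis ex_in_conv)
  obtain y where y: "y \<in> Y" using Y partition_onD3[OF P] by (metis ex_in_conv)
  have "x \<noteq> y" using part_same[OF P X Y(1) x] y Y(2) by auto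
  hence pr: "{x,y} \<in> pairs n" using partition_onD1[OF P] X Y x y unfolding pairs_def by blast
  have "cvec A {x,y} = 0"
  proof (rule ccontr)
    assume "cvec A {x,y} \<noteq> 0"
    then obtain Z where Z: "Z \<in> A" "{x,y} \<subseteq> Z" unfolding cvec_def by (auto split: if_splits)
    have "Z = X" using part_same[OF P Z(1) X] Z x by auto
    moreover have "Z = Y" using part_same[OF P Z(1) Y(1)] Z y by auto
    ultimately show False using Y(2) by simp
  qed
  thus ?thesis using pr by blast
qed

lemma L5:
  assumes A: "partition_on {1..n} A" and B: "partition_on {1..n} B"
    and eq: "\<And>p. p \<in> pairs n \<Longrightarrow> cvec A p = cvec B p"
  shows "A \<subseteq> B"
proof
  fix X assume X: "X \<in> A"
  then obtain x where x: "x \<in> X" using partition_onD3[OF A] by (metis ex_in_conv)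
  have xn: "x \<in> {1..n}" using partition_onD1[OF A] X x by blast
  then obtain Y where Y: "Y \<in> B" "x \<in> Y" using partition_onD1[OF B] by blast
  have "X = Y"
  proof
    show "X \<subseteq> Y"
    proof
      fix z assume z: "z \<in> X"
      show "z \<in> Y"
      proof (cases "z = x")
        case False
        hence pr: "{x,z} \<in> pairs n" using partition_onD1[OF A] X x z unfolding pairs_def by blast
        have "cvec A {x,z} = 1" using X x z unfolding cvec_def by auto
        hence "cvec B {x,z} = 1" using eq[OF pr] by simp
        then obtain Y' where "Y' \<in> B" "{x,z} \<subseteq> Y'" unfolding cvec_def by (auto split: if_splits)
        moreover hence "Y' = Y" using part_same[OF B _ Y(1)] Y(2) by auto
        ultimately show ?thesis by auto
      qed (use Y in auto)
    qed
    show "Y \<subseteq> X"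
    proof
      fix z assume z: "z \<in> Y"
      show "z \<in> X"
      proof (cases "z = x")
        case False
        hence pr: "{x,z} \<in> pairs n" using partition_onD1[OF B] Y z unfolding pairs_def by blast
        have "cvec B {x,z} = 1" using Y z unfolding cvec_def by auto
        hence "cvec A {x,z} = 1" using eq[OF pr] by simp
        then obtain X' where "X' \<in> A" "{x,z} \<subseteq> X'" unfolding cvec_def by (auto split: if_splits)
        moreover hence "X' = X" using part_same[OF A _ X] x by auto
        ultimately show ?thesis by auto
      qed (use x in auto)
    qed
  qed
  thus "X \<in> B" using Y by simp
qed



lemma cvec_cases: "cvec A p = 1 \<or> cvec A p = 0" unfolding cvec_def by auto

lemma const_sum:
  assumes "n \<ge> 2"
  shows "(\<Sum>p\<in>pairs n. (k / sqrt (NN n))^2) = k^2"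
proof -
  have N: "NN n > 0" using NN_pos assms by simp
  have "(\<Sum>p\<in>pairs n. (k / sqrt (NN n))^2) = NN n * (k^2 / NN n)"
    using N by (simp add: NN_def power_divide)
  also have "\<dots> = k^2" using N by simp
  finally show ?thesis .
qed

lemma unit_sign:
  assumes n: "n \<ge> 2" and P: "partition_on {1..n} A"
  shows "(\<Sum>p\<in>pairs n. (uvec n A p)^2) = 1 \<and> (\<forall>p\<in>pairs n. (uvec n A p > 0 \<longleftrightarrow> cvec A p = 1))"
proof -
  have N: "NN n > 0" using NN_pos n by simp
  consider "card A = 1" | "card A \<noteq> 1" "card A = n" | "card A \<noteq> 1" "card A \<noteq> n" by blast
  then show ?thesis
  proof cases
    case 1
    hence u: "uvec n A = (\<lambda>p. 1 / sqrt (NN n))" unfolding uvec_def by simp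
    show ?thesis using const_sum[OF n, of 1] L1[OF P 1] N unfolding u by simp
  next
    case 2
    hence u: "uvec n A = (\<lambda>p. - 1 / sqrt (NN n))" unfolding uvec_def by simp
    have "\<forall>p\<in>pairs n. cvec A p = 0" using L2[OF P 2(2)] by blast
    thus ?thesis using const_sum[OF n, of "-1"] N unfolding u by simp
  next
    case 3
    define m where "m = m_intra n A"
    define c where "c = (\<lambda>p. cvec A p - m / NN n)"
    have u: "uvec n A = (\<lambda>p. c p / vnorm n c)" using 3 unfolding uvec_def c_def m_def Let_def by simp
    obtain p0 where p0: "p0 \<in> pairs n" "cvec A p0 = 0" using L4[OF P 3(1)] n by auto
    obtain p1 where p1: "p1 \<in> pairs n" "cvec A p1 = 1" using L3[OF P 3(2)] by auto
    have sub: "{p \<in> pairs n. \<exists>X\<in>A. p \<subseteq> X} \<subset> pairs n"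
      using p0 unfolding cvec_def by (auto split: if_splits)
    have "m < NN n" unfolding m_def m_intra_def NN_def
      using psubset_card_mono[OF pairs_finite sub] by simp
    hence mN: "m / NN n < 1" using N by simp
    have m0: "m / NN n \<ge> 0" unfolding m_def m_intra_def using N by simp
    have pos: "c p1 > 0" using mN p1 unfolding c_def by simp
    have Spos: "(\<Sum>p\<in>pairs n. (c p)^2) > 0"
    proof -
      have "(c p1)^2 \<le> (\<Sum>p\<in>pairs n. (c p)^2)"
        using member_le_sum[OF p1(1), of "\<lambda>p. (c p)^2"] pairs_finite by simp
      moreover have "(c p1)^2 > 0" using pos by simp
      ultimately show ?thesis by linarith
    qed
    have v2: "(vnorm n c)^2 = (\<Sum>p\<in>pairs n. (c p)^2)"
      unfolding vnorm_def using Spos by simp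
    have vpos: "vnorm n c > 0" unfolding vnorm_def using Spos by simp
    have "(\<Sum>p\<in>pairs n. (uvec n A p)^2) = (\<Sum>p\<in>pairs n. (c p)^2) / (vnorm n c)^2"
      unfolding u by (simp add: power_divide sum_divide_distrib)
    also have "\<dots> = 1" using v2 Spos by simp
    finally have s1: "(\<Sum>p\<in>pairs n. (uvec n A p)^2) = 1" .
    have "\<forall>p\<in>pairs n. (uvec n A p > 0 \<longleftrightarrow> cvec A p = 1)"
    proof
      fix p assume "p \<in> pairs n"
      have "uvec n A p > 0 \<longleftrightarrow> c p > 0" unfolding u using vpos by (simp add: zero_less_divide_iff)
      also have "\<dots> \<longleftrightarrow> cvec A p = 1" unfolding c_def using mN m0 cvec_cases[of A p] by auto
      finally show "uvec n A p > 0 \<longleftrightarrow> cvec A p = 1" .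
    qed
    thus ?thesis using s1 by simp
  qed
qed



lemma CC_bound:
  assumes n: "n \<ge> 2" "partition_on {1..n} A" "partition_on {1..n} B"
  shows "-1 \<le> CC n A B \<and> CC n A B \<le> 1"
  unfolding CC_def using inner_bound[OF pairs_finite] unit_sign[OF n(1,2)] unit_sign[OF n(1,3)] by blast

lemma CD_zero:
  assumes n: "n \<ge> 2" and A: "partition_on {1..n} A" and B: "partition_on {1..n} B"
  shows "CD n A B = 0 \<longleftrightarrow> A = B"
proof
  assume "A = B"
  hence "CC n A B = 1" unfolding CC_def using unit_sign[OF n A] by (simp add: power2_eq_square)
  thus "CD n A B = 0" unfolding CD_def by simp
next
  assume "CD n A B = 0"
  hence ac: "arccos (CC n A B) = 0" unfolding CD_def by simp
  have b: "-1 \<le> CC n A B \<and> CC n A B \<le> 1" using CC_bound[OF n A B] .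
  have "CC n A B = cos (arccos (CC n A B))" using b by simp
  hence c1: "CC n A B = 1" using ac by simp
  have uA: "(\<Sum>p\<in>pairs n. (uvec n A p)^2) = 1" and uB: "(\<Sum>p\<in>pairs n. (uvec n B p)^2) = 1"
    using unit_sign[OF n A] unit_sign[OF n B] by auto
  have "(\<Sum>p\<in>pairs n. (uvec n A p - uvec n B p)^2) = (\<Sum>p\<in>pairs n. (uvec n A p)^2) + (\<Sum>p\<in>pairs n. (uvec n B p)^2) - 2 * CC n A B"
    unfolding CC_def by (simp add: power2_diff sum.distrib sum_distrib_left sum_subtractf mult.assoc)
  hence "(\<Sum>p\<in>pairs n. (uvec n A p - uvec n B p)^2) = 0" using uA uB c1 by simp
  hence "\<forall>p\<in>pairs n. (uvec n A p - uvec n B p)^2 = 0"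
    using sum_nonneg_eq_0_iff[OF pairs_finite] by (metis (no_types, lifting) zero_le_power2)
  hence eqv: "\<And>p. p \<in> pairs n \<Longrightarrow> uvec n A p = uvec n B p" by simp
  have eqc: "\<And>p. p \<in> pairs n \<Longrightarrow> cvec A p = cvec B p"
  proof -
    fix p assume p: "p \<in> pairs n"
    have "cvec A p = 1 \<longleftrightarrow> cvec B p = 1" using unit_sign[OF n A] unit_sign[OF n B] eqv[OF p] p by auto
    thus "cvec A p = cvec B p" using cvec_cases[of A p] cvec_cases[of B p] by auto
  qed
  show "A = B" using L5[OF A B eqc] L5[OF B A] eqc by (metis subset_antisym)
qed

theorem theorem1:
  fixes n :: nat
  assumes "n \<ge> 2"
  shows "\<forall>A\<in>clusterings n. \<forall>B\<in>clusterings n. \<forall>C\<in>clusterings n.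
           CD n A B \<in> {0..1} \<and>
           CD n A B = CD n B A \<and>
           CD n A B \<ge> 0 \<and> (CD n A B = 0 \<longleftrightarrow> A = B) \<and>
           CD n A C \<le> CD n A B + CD n B C"
proof (intro ballI)
  fix A B C assume "A \<in> clusterings n" "B \<in> clusterings n" "C \<in> clusterings n"
  hence A: "partition_on {1..n} A" and B: "partition_on {1..n} B" and C: "partition_on {1..n} C"
    unfolding clusterings_def by auto
  have b: "-1 \<le> CC n A B \<and> CC n A B \<le> 1" using CC_bound[OF assms A B] .
  have r1: "0 \<le> CD n A B" unfolding CD_def using arccos_lbound b by simp
  have r2: "CD n A B \<le> 1" unfolding CD_def using arccos_ubound b by simp
  have sym: "CD n A B = CD n B A" unfolding CD_def CC_def by (simp add: mult.commute)
  have "arccos (CC n A C) \<le> arccos (CC n A B) + arccos (CC n B C)"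
    unfolding CC_def using sph_tri[OF pairs_finite] unit_sign[OF assms A] unit_sign[OF assms B] unit_sign[OF assms C] by blast
  hence tri: "CD n A C \<le> CD n A B + CD n B C" unfolding CD_def
    by (simp add: divide_right_mono add_divide_distrib[symmetric])
  show "CD n A B \<in> {0..1} \<and> CD n A B = CD n B A \<and> CD n A B \<ge> 0 \<and> (CD n A B = 0 \<longleftrightarrow> A = B) \<and>
           CD n A C \<le> CD n A B + CD n B C"
    using r1 r2 sym tri CD_zero[OF assms A B] by simp
qed

end
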